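(* Let $N=[n]$ and let $v:2^N\to\mathbb{R}_+$ be any monotone valuation with $v(\emptyset)=0$. For any decision map $X'$ for $v$ and any $\epsilon>0$, there exists an $\epsilon$-Nash equilibrium $p$ of the pricing game defined by $v$ and $X'$ which is welfare maximizing, i.e., $v(X'(p))=\max_{S\subseteq N}v(S)$.
   Context: Pricing game: $N=[n]$ is a set of services, service $i$ controlled by seller $i$. A buyer has valuation $v:2^N\to\mathbb{R}_+$, monotone with $v(\emptyset)=0$. For $p\in\mathbb{R}^n_+$, $p(S)=\sum_{j\in S}p_j$ and $D(v;p)=\arg\max_{S\subseteq N}(v(S)-p(S))$. A decision map is $X':\mathbb{R}^n_+\to 2^N$ with $X'(p)\in D(v;p)$ for all $p$ (not necessarily maximal). Seller $i$'s utility is $u_i(p)=p_i\cdot\mathbf{1}\{i\in X'(p)\}$. An $\epsilon$-Nash equilibrium is a $p$ with $u_i(p)\ge u_i(p_i',p_{-i})-\epsilon$ for all $i$ and $p_i'\in\mathbb{R}_+$. The welfare at $p$ is $v(X'(p))$. *)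

theory Defs
  imports "HOL-Analysis.Analysis"
begin

text \<open>Services are N = {0..<n}. A price vector in R^n_+ is modelled as a function
  nat => real that is nonnegative on N and zero outside N (canonical representative).\<close>

definition price_vecs :: "nat \<Rightarrow> (nat \<Rightarrow> real) set" where
  "price_vecs n = {p. (\<forall>i<n. 0 \<le> p i) \<and> (\<forall>i. n \<le> i \<longrightarrow> p i = 0)}"

definition valuation :: "nat \<Rightarrow> (nat set \<Rightarrow> real) \<Rightarrow> bool" where
  "valuation n v \<longleftrightarrow> v {} = 0 \<and> (\<forall>S. S \<subseteq> {0..<n} \<longrightarrow> 0 \<le> v S) \<and>
     (\<forall>S T. S \<subseteq> T \<and> T \<subseteq> {0..<n} \<longrightarrow> v S \<le> v T)"

definition price_of :: "(nat \<Rightarrow> real) \<Rightarrow> nat set \<Rightarrow> real" where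
  "price_of p S = (\<Sum>j\<in>S. p j)"

definition demand :: "nat \<Rightarrow> (nat set \<Rightarrow> real) \<Rightarrow> (nat \<Rightarrow> real) \<Rightarrow> nat set set" where
  "demand n v p = {S. S \<subseteq> {0..<n} \<and>
     (\<forall>T. T \<subseteq> {0..<n} \<longrightarrow> v T - price_of p T \<le> v S - price_of p S)}"

definition decision_map :: "nat \<Rightarrow> (nat set \<Rightarrow> real) \<Rightarrow> ((nat \<Rightarrow> real) \<Rightarrow> nat set) \<Rightarrow> bool" where
  "decision_map n v X \<longleftrightarrow> (\<forall>p \<in> price_vecs n. X p \<in> demand n v p)"

definition seller_utility :: "((nat \<Rightarrow> real) \<Rightarrow> nat set) \<Rightarrow> nat \<Rightarrow> (nat \<Rightarrow> real) \<Rightarrow> real" where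
  "seller_utility X i p = (if i \<in> X p then p i else 0)"

definition eps_nash :: "nat \<Rightarrow> ((nat \<Rightarrow> real) \<Rightarrow> nat set) \<Rightarrow> real \<Rightarrow> (nat \<Rightarrow> real) \<Rightarrow> bool" where
  "eps_nash n X \<epsilon> p \<longleftrightarrow> p \<in> price_vecs n \<and>
     (\<forall>i<n. \<forall>q::real. 0 \<le> q \<longrightarrow>
        seller_utility X i p \<ge> seller_utility X i (p(i := q)) - \<epsilon>)"

end

theory Submission
  imports Defs
begin

lemma po_split: "S \<subseteq> {0..<n} \<Longrightarrow> price_of p {0..<n} = price_of p S + price_of p ({0..<n} - S)"
  unfolding price_of_def by (simp add: sum.subset_diff[of S "{0..<n}"])

lemma po_upd_notin: "i \<notin> A \<Longrightarrow> price_of (p(i:=q)) A = price_of p A"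
  unfolding price_of_def by (rule sum.cong) auto

lemma po_upd_in: "finite A \<Longrightarrow> i \<in> A \<Longrightarrow> price_of (p(i:=q)) A = price_of p A - p i + q"
proof -
  assume A: "finite A" "i \<in> A"
  have "price_of (p(i:=q)) A = q + price_of (p(i:=q)) (A - {i})"
    unfolding price_of_def using A by (simp add: sum.remove)
  also have "\<dots> = q + price_of p (A - {i})" using po_upd_notin[of i "A - {i}"] by simp
  also have "price_of p A = p i + price_of p (A - {i})"
    unfolding price_of_def using A by (simp add: sum.remove)
  ultimately show ?thesis by simp
qed

lemma po_nonneg: "(\<And>j. j \<in> A \<Longrightarrow> 0 \<le> p j) \<Longrightarrow> 0 \<le> price_of p A"
  unfolding price_of_def by (rule sum_nonneg) auto

lemma po_ge_elem: "finite A \<Longrightarrow> i \<in> A \<Longrightarrow> (\<And>j. j \<in> A \<Longrightarrow> 0 \<le> p j) \<Longrightarrow> p i \<le> price_of p A"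
  unfolding price_of_def by (rule member_le_sum) auto

theorem mainTheorem4:
  fixes n :: nat and v :: "nat set \<Rightarrow> real" and X :: "(nat \<Rightarrow> real) \<Rightarrow> nat set"
    and \<epsilon> :: real
  assumes "valuation n v"
    and "decision_map n v X"
    and "\<epsilon> > 0"
  shows "\<exists>p. eps_nash n X \<epsilon> p \<and> v (X p) = Max (v ` Pow {0..<n})"
proof -
  define N where "N = {0..<n}"
  define V where "V = v N"
  have v0: "v {} = 0" and vnn: "\<And>S. S \<subseteq> N \<Longrightarrow> 0 \<le> v S"
    and vmono: "\<And>S. S \<subseteq> N \<Longrightarrow> v S \<le> V"
    using assms(1) unfolding valuation_def N_def V_def by auto
  define B where "B = (\<lambda>S. (V - v S) / 2) ` {S. S \<subseteq> N \<and> v S < V}"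
  have finB: "finite B" unfolding B_def N_def by (rule finite_imageI) (simp add: finite_subset)
  define \<delta> where "\<delta> = Min (insert (\<epsilon>/2) B)"
  have dpos: "\<delta> > 0"
    unfolding \<delta>_def using finB assms(3) by (auto simp: B_def)
  have dle: "\<delta> \<le> \<epsilon>/2" unfolding \<delta>_def using finB by (intro Min_le) auto
  have dgap: "\<And>S. S \<subseteq> N \<Longrightarrow> v S < V \<Longrightarrow> \<delta> < V - v S"
  proof -
    fix S assume "S \<subseteq> N" "v S < V"
    then have "(V - v S)/2 \<in> B" unfolding B_def by auto
    then have "\<delta> \<le> (V - v S)/2" unfolding \<delta>_def using finB by (intro Min_le) auto
    then show "\<delta> < V - v S" using \<open>v S < V\<close> by simp
  qed
  define d where "d = (\<lambda>S. if v S < V then \<delta> else 0)"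
  define feas where "feas = (\<lambda>p. \<forall>S. S \<subseteq> N \<longrightarrow> price_of p (N - S) \<le> V - v S - d S)"
  define K where "K = nat \<lceil>V/\<delta>\<rceil> + 1"
  define pf where "pf = (\<lambda>f::nat\<Rightarrow>nat. \<lambda>j. \<delta> * real (f j))"
  define P where "P = (\<lambda>f. (\<forall>j. f j \<le> K) \<and> (\<forall>j\<ge>n. f j = 0) \<and> feas (pf f))"
  have "P (\<lambda>_. 0)"
  proof -
    have "feas (pf (\<lambda>_. 0))" unfolding feas_def
    proof (intro allI impI)
      fix S assume S: "S \<subseteq> N"
      have "price_of (pf (\<lambda>_. 0)) (N - S) = 0" unfolding price_of_def pf_def by simp
      then show "price_of (pf (\<lambda>_. 0)) (N - S) \<le> V - v S - d S"
        using dgap[OF S] vmono[OF S] unfolding d_def by auto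
    qed
    then show ?thesis unfolding P_def by simp
  qed
  moreover have "\<forall>f. P f \<longrightarrow> sum f {0..<n} < n * K + 1"
  proof (intro allI impI)
    fix f assume "P f"
    then have "sum f {0..<n} \<le> sum (\<lambda>_. K) {0..<n}" unfolding P_def by (intro sum_mono) auto
    then show "sum f {0..<n} < n * K + 1" by simp
  qed
  ultimately obtain f where Pf: "P f" and fmax: "\<And>g. P g \<Longrightarrow> sum g {0..<n} \<le> sum f {0..<n}"
    using ex_has_greatest_nat[of P "\<lambda>_. 0" "\<lambda>f. sum f {0..<n}" "n*K+1"] by blast
  define p where "p = pf f"
  have pnn: "\<And>j. 0 \<le> p j" unfolding p_def pf_def using dpos by simp
  have feasp: "feas p" using Pf unfolding P_def p_def by simp
  have pvec: "p \<in> price_vecs n" using Pf pnn unfolding P_def p_def pf_def price_vecs_def by simp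
  have key: "\<And>S. S \<subseteq> N \<Longrightarrow> V - v S \<le> price_of p (N - S) \<Longrightarrow> v S = V \<and> price_of p (N - S) \<le> 0"
  proof -
    fix S assume S: "S \<subseteq> N" and h: "V - v S \<le> price_of p (N - S)"
    have "price_of p (N - S) \<le> V - v S - d S" using feasp S unfolding feas_def by blast
    with h have "d S \<le> 0" by simp
    then have "\<not> v S < V" unfolding d_def using dpos by (auto split: if_splits)
    with vmono[OF S] have "v S = V" by simp
    with \<open>price_of p (N - S) \<le> V - v S - d S\<close> show "v S = V \<and> price_of p (N - S) \<le> 0"
      unfolding d_def by simp
  qed
  have dem_key: "\<And>pp S. S \<in> demand n v pp \<Longrightarrow> (\<forall>j\<in>N - S. pp j = p j) \<Longrightarrow> v S = V \<and> price_of p (N - S) \<le> 0"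
  proof -
    fix pp S assume D: "S \<in> demand n v pp" and eq: "\<forall>j\<in>N - S. pp j = p j"
    have S: "S \<subseteq> N" and opt: "v N - price_of pp N \<le> v S - price_of pp S"
      using D unfolding demand_def N_def by auto
    have "price_of pp (N - S) = price_of p (N - S)" unfolding price_of_def
      using eq by (intro sum.cong) auto
    moreover have "price_of pp N = price_of pp S + price_of pp (N - S)"
      using po_split[of S n pp] S unfolding N_def by simp
    ultimately have "V - v S \<le> price_of p (N - S)" using opt unfolding V_def by simp
    then show "v S = V \<and> price_of p (N - S) \<le> 0" using key S by blast
  qed
  have viol: "\<And>i. i < n \<Longrightarrow> \<exists>T. T \<subseteq> N \<and> i \<notin> T \<and> V - v T < price_of p (N - T) + 2*\<delta>"
  proof -
    fix i assume i: "i < n"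
    define g where "g = f(i := Suc (f i))"
    have "sum g {0..<n} = sum f {0..<n} + 1"
    proof -
      have "sum g {0..<n} = g i + sum g ({0..<n} - {i})" using i by (simp add: sum.remove)
      also have "sum g ({0..<n} - {i}) = sum f ({0..<n} - {i})" unfolding g_def by (intro sum.cong) auto
      also have "sum f {0..<n} = f i + sum f ({0..<n} - {i})" using i by (simp add: sum.remove)
      ultimately show ?thesis unfolding g_def by simp
    qed
    then have notP: "\<not> P g" using fmax[of g] by auto
    have "p i \<le> price_of p (N - {})" using po_ge_elem[of "N - {}" i p] pnn i unfolding N_def by simp
    also have "\<dots> \<le> V - v {} - d {}" using feasp unfolding feas_def by blast
    finally have "p i \<le> V" using v0 dpos unfolding d_def by (auto split: if_splits)
    then have "real (f i) \<le> V / \<delta>" using dpos unfolding p_def pf_def by (simp add: field_simps)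
    then have "f i < K" unfolding K_def by linarith
    then have gK: "\<forall>j. g j \<le> K" using Pf unfolding P_def g_def by auto
    have g0: "\<forall>j\<ge>n. g j = 0" using Pf i unfolding P_def g_def by auto
    have "\<not> feas (pf g)" using notP gK g0 unfolding P_def by blast
    then obtain T where T: "T \<subseteq> N" and bad: "\<not> price_of (pf g) (N - T) \<le> V - v T - d T"
      unfolding feas_def by blast
    have pfg: "pf g = p(i := p i + \<delta>)" unfolding pf_def p_def g_def by (auto simp: algebra_simps)
    show "\<exists>T. T \<subseteq> N \<and> i \<notin> T \<and> V - v T < price_of p (N - T) + 2*\<delta>"
    proof (cases "i \<in> T")
      case True
      then have "price_of (pf g) (N - T) = price_of p (N - T)" using pfg po_upd_notin[of i "N - T"] by simp
      moreover have "price_of p (N - T) \<le> V - v T - d T" using feasp T unfolding feas_def by blast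
      ultimately show ?thesis using bad by simp
    next
      case False
      then have "price_of (pf g) (N - T) = price_of p (N - T) + \<delta>"
        using pfg po_upd_in[of "N - T" i] i unfolding N_def by simp
      moreover have "d T \<le> \<delta>" unfolding d_def using dpos by simp
      ultimately have "V - v T < price_of p (N - T) + 2*\<delta>" using bad by linarith
      then show ?thesis using T False by blast
    qed
  qed
  have X0: "X p \<in> demand n v p" using assms(2) pvec unfolding decision_map_def by blast
  have w: "v (X p) = V \<and> price_of p (N - X p) \<le> 0" using dem_key[OF X0] by simp
  have nash: "eps_nash n X \<epsilon> p"
    unfolding eps_nash_def
  proof (intro conjI allI impI pvec)
    fix i q assume i: "i < n" and q: "(0::real) \<le> q"
    define pq where "pq = p(i := q)"
    have pqv: "pq \<in> price_vecs n" using pvec i q unfolding pq_def price_vecs_def by auto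
    have u0: "0 \<le> seller_utility X i p" unfolding seller_utility_def using pnn by simp
    show "seller_utility X i (p(i := q)) - \<epsilon> \<le> seller_utility X i p"
    proof (cases "i \<in> X pq")
      case False
      then show ?thesis using u0 assms(3) unfolding seller_utility_def pq_def by simp
    next
      case True
      define S where "S = X pq"
      have DS: "S \<in> demand n v pq" using assms(2) pqv unfolding decision_map_def S_def by blast
      have iS: "i \<in> S" using True S_def by simp
      have SN: "S \<subseteq> N" using DS unfolding demand_def N_def by auto
      have kS: "v S = V \<and> price_of p (N - S) \<le> 0"
        using dem_key[OF DS] iS unfolding pq_def by auto
      obtain T where T: "T \<subseteq> N" "i \<notin> T" "V - v T < price_of p (N - T) + 2*\<delta>" using viol[OF i] by blast
      have "v T - price_of pq T \<le> v S - price_of pq S" using DS T(1) unfolding demand_def N_def by blast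
      moreover have "price_of pq T = price_of p T" using po_upd_notin T(2) unfolding pq_def by simp
      moreover have "price_of pq S = price_of p S - p i + q"
        proof -
        have "finite S" using SN unfolding N_def by (simp add: finite_subset)
        then show ?thesis using po_upd_in[of S i p q] iS unfolding pq_def by simp
      qed
      moreover have "price_of p N = price_of p T + price_of p (N - T)" using po_split T(1) unfolding N_def by blast
      moreover have "price_of p N = price_of p S + price_of p (N - S)" using po_split SN unfolding N_def by blast
      ultimately have qb: "q < p i + 2*\<delta>" using kS T(3) by linarith
      show ?thesis
      proof (cases "i \<in> X p")
        case True
        then show ?thesis using qb dle iS unfolding seller_utility_def S_def pq_def by auto
      next
        case False
        have XN: "X p \<subseteq> N" using X0 unfolding demand_def N_def by auto
        have "p i \<le> price_of p (N - X p)"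
          using po_ge_elem[of "N - X p" i p] pnn i False unfolding N_def by auto
        with w pnn[of i] have "p i = 0" by simp
        then show ?thesis using qb dle False iS unfolding seller_utility_def S_def pq_def by auto
      qed
    qed
  qed
  have "Max (v ` Pow {0..<n}) = V"
  proof (rule Max_eqI)
    show "finite (v ` Pow {0..<n})" by simp
    show "\<And>y. y \<in> v ` Pow {0..<n} \<Longrightarrow> y \<le> V" using vmono unfolding N_def by auto
    show "V \<in> v ` Pow {0..<n}" unfolding V_def N_def by auto
  qed
  then show ?thesis using nash w by auto
qed

end
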